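(* Let $m>n$, $1<p<\infty$, $Y^m=[0,1)^m$, and let $\mathbf{R}\in\mathbb{R}^{m\times n}$ satisfy $\mathbf{R}^*k\neq0$ for all $k\in\mathbb{Z}^m\setminus\{0\}$. Then $$\mathcal{G}^p_{\mathbf{R}}:=\{w\in L^p_\#(Y^m;\mathbb{R}^n):\ \hat w_k=\lambda_k\mathbf{R}^*k\ \text{for all } k\in\mathbb{Z}^m, \text{ for some } \{\lambda_k\}_{k\in\mathbb{Z}^m}\subset\mathbb{C}\text{ with }\lambda_0=0\}$$ is a closed linear subspace of $L^p_\#(Y^m;\mathbb{R}^n)$, where $\hat w_k:=\int_{Y^m}w(y)e^{-2\pi ik\cdot y}\,dy$.
   Context: $L^p_\#(Y^m;\mathbb{R}^n)$ denotes the $Y^m$-periodic functions in $L^p_{\rm loc}(\mathbb{R}^m;\mathbb{R}^n)$, with the $L^p(Y^m)$ norm; $\mathbf{R}^*$ is the transpose of $\mathbf{R}$. *)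

theory Defs
  imports "HOL-Analysis.Analysis"
begin

definition int_vec :: "real ^ 'm \<Rightarrow> bool" where
  "int_vec k \<longleftrightarrow> (\<forall>i. k $ i \<in> \<int>)"

definition unit_cell :: "(real ^ 'm) set" where
  "unit_cell = {y. \<forall>i. 0 \<le> y $ i \<and> y $ i < 1}"

text \<open>Y^m-periodic functions in L^p_loc(R^m;R^n) (represented by a periodic,
  Lebesgue-measurable representative with finite L^p(Y^m) norm).\<close>
definition Lp_per :: "real \<Rightarrow> (real ^ 'm \<Rightarrow> real ^ 'n) set" where
  "Lp_per p = {w. w \<in> borel_measurable lebesgue
     \<and> (\<forall>y z. int_vec z \<longrightarrow> w (y + z) = w y)
     \<and> set_integrable lebesgue unit_cell (\<lambda>y. norm (w y) powr p)}"

definition Lp_dist :: "real \<Rightarrow> (real ^ 'm \<Rightarrow> real ^ 'n) \<Rightarrow> (real ^ 'm \<Rightarrow> real ^ 'n) \<Rightarrow> real" where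
  "Lp_dist p u v = (LINT y:unit_cell|lebesgue. norm (u y - v y) powr p) powr (1 / p)"

definition fourier_coeff :: "(real ^ 'm \<Rightarrow> real ^ 'n) \<Rightarrow> real ^ 'm \<Rightarrow> complex ^ 'n" where
  "fourier_coeff w k = (\<chi> j. LINT y:unit_cell|lebesgue.
       complex_of_real (w y $ j) * cis (- 2 * pi * (k \<bullet> y)))"

definition G_space :: "real \<Rightarrow> real ^ 'n ^ 'm \<Rightarrow> (real ^ 'm \<Rightarrow> real ^ 'n) set" where
  "G_space p R = {w \<in> Lp_per p. \<exists>lam :: real ^ 'm \<Rightarrow> complex. lam 0 = 0 \<and>
      (\<forall>k. int_vec k \<longrightarrow>
         fourier_coeff w k = lam k *s (\<chi> j. complex_of_real ((transpose R *v k) $ j)))}"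

end

theory Submission
  imports Defs
begin
lemma uc_sets: "unit_cell \<in> sets lebesgue"
proof -
  have e: "unit_cell = (\<Inter>i. {y::real^'m. y $ i \<ge> 0} \<inter> {y. y $ i < 1})" unfolding unit_cell_def by auto
  have "{y::real^'m. y $ i \<ge> 0} \<in> sets borel" for i
    by (rule borel_closed) (rule closed_halfspace_component_ge_cart)
  moreover have "{y::real^'m. y $ i < 1} \<in> sets borel" for i
    by (rule borel_open) (rule open_halfspace_component_lt_cart)
  ultimately have "(\<Inter>i. {y::real^'m. y $ i \<ge> 0} \<inter> {y. y $ i < 1}) \<in> sets borel"
    by (intro sets.finite_INT sets.Int) auto
  then have "(\<Inter>i. {y::real^'m. y $ i \<ge> 0} \<inter> {y. y $ i < 1}) \<in> sets lebesgue"
    by (intro sets_completionI_sets) simp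
  then show ?thesis unfolding e .
qed
lemma uc_fin: "emeasure lebesgue (unit_cell :: (real^'m) set) < \<infinity>"
proof -
  have "unit_cell \<subseteq> cbox (0::real^'m) (\<chi> i. 1)" unfolding unit_cell_def by (auto simp: mem_box_cart less_imp_le )
  then have "emeasure lebesgue (unit_cell :: (real^'m) set) \<le> emeasure lebesgue (cbox (0::real^'m) (\<chi> i. 1))"
    by (intro emeasure_mono) auto
  also have "\<dots> < \<infinity>" using emeasure_lborel_cbox_finite by simp
  finally show ?thesis .
qed
lemma meas_comp: fixes w :: "real^'m \<Rightarrow> real^'n" assumes "w \<in> borel_measurable lebesgue"
  shows "(\<lambda>y. complex_of_real (w y $ j) * cis (- 2 * pi * (k \<bullet> y))) \<in> borel_measurable lebesgue"
proof -
  have 1: "(\<lambda>y. w y $ j) \<in> borel_measurable lebesgue"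
    using borel_measurable_continuous_on[OF continuous_on_component[OF continuous_on_id] assms] by simp
  have 2: "(\<lambda>y. cis (- 2 * pi * (k \<bullet> y))) \<in> borel_measurable lebesgue"
    using borel_measurable_continuous_on[OF _ id_borel_measurable_lebesgue, of "\<lambda>y. cis (- 2 * pi * (k \<bullet> y))"]
    by (simp add: continuous_on_cis continuous_intros)
  show ?thesis using 1 2 by measurable
qed

lemma set_meas: assumes "g \<in> borel_measurable lebesgue"
  shows "set_borel_measurable lebesgue (unit_cell :: (real^'m) set) (g :: real^'m \<Rightarrow> 'b::{real_normed_vector, second_countable_topology})"
  unfolding set_borel_measurable_def
  apply (intro borel_measurable_scaleR)
   apply (rule borel_measurable_indicator)
   apply (rule uc_sets)
  by (rule assms)

lemma int_one: "set_integrable lebesgue (unit_cell :: (real^'m) set) (\<lambda>_. 1::real)"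
  unfolding set_integrable_def using integrable_indicator[OF uc_sets uc_fin, of "1::real"] by simp

lemma meas_np: fixes w :: "real^'m \<Rightarrow> real^'n" assumes "w \<in> borel_measurable lebesgue"
  shows "(\<lambda>y. norm (w y) powr p) \<in> borel_measurable lebesgue"
  using assms by measurable

lemma le_powr: assumes "(0::real) \<le> t" "1 \<le> p" shows "t \<le> 1 + t powr p"
proof (cases "t \<le> 1")
  case True then show ?thesis using assms by (smt (verit) powr_ge_zero)
next
  case False
  then have "t powr 1 \<le> t powr p" using assms by (intro powr_mono) auto
  then show ?thesis using False by simp
qed

lemma eps_powr: assumes "(0::real) \<le> t" "1 \<le> p" "0 < e" shows "t \<le> e + e powr (1 - p) * t powr p"
proof (cases "t \<le> e")
  case True then show ?thesis using assms by (smt (verit) powr_ge_zero mult_nonneg_nonneg)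
next
  case False
  then have tp: "t > 0" using assms by simp
  have "e powr (p - 1) \<le> t powr (p - 1)" using False assms by (intro powr_mono2) auto
  then have "t * e powr (p - 1) \<le> t * t powr (p - 1)" using tp by simp
  also have "t * t powr (p - 1) = t powr p"
  proof -
    have "t powr p = t powr (1 + (p - 1))" by simp
    also have "\<dots> = t powr 1 * t powr (p - 1)" by (rule powr_add)
    finally show ?thesis using tp by simp
  qed
  finally have "t * e powr (p - 1) * e powr (1 - p) \<le> t powr p * e powr (1 - p)"
    by (intro mult_right_mono) auto
  moreover have "e powr (p - 1) * e powr (1 - p) = 1" using assms by (simp add: powr_add[symmetric])
  ultimately have "t \<le> t powr p * e powr (1 - p)" by (simp add: mult.assoc)
  then have "t \<le> e powr (1 - p) * t powr p" by (simp add: mult.commute)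
  then show ?thesis using assms by simp
qed

lemma Lp_int_norm: assumes "w \<in> Lp_per p" "1 \<le> p"
  shows "set_integrable lebesgue unit_cell (\<lambda>y. norm (w y))"
proof (rule set_integrable_bound[where f = "\<lambda>y. 1 + norm (w y) powr p"])
  show "set_integrable lebesgue unit_cell (\<lambda>y. 1 + norm (w y) powr p)"
    using assms(1) int_one unfolding Lp_per_def by (intro set_integral_add) blast+
  show "set_borel_measurable lebesgue unit_cell (\<lambda>y. norm (w y))"
  proof (intro set_meas)
    have "w \<in> borel_measurable lebesgue" using assms(1) unfolding Lp_per_def by blast
    then show "(\<lambda>y. norm (w y)) \<in> borel_measurable lebesgue" by measurable
  qed
  show "AE x in lebesgue. x \<in> unit_cell \<longrightarrow> norm (norm (w x)) \<le> norm (1 + norm (w x) powr p)"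
    using le_powr[OF _ assms(2)] by (intro AE_I2) (smt (verit) norm_ge_zero powr_ge_zero real_norm_def)
qed

lemma Lp_int_comp: assumes "w \<in> Lp_per p" "1 \<le> p"
  shows "set_integrable lebesgue unit_cell (\<lambda>y. complex_of_real (w y $ j) * cis (- 2 * pi * (k \<bullet> y)))"
proof (rule set_integrable_bound[OF Lp_int_norm[OF assms]])
  show "set_borel_measurable lebesgue unit_cell (\<lambda>y. complex_of_real (w y $ j) * cis (- 2 * pi * (k \<bullet> y)))"
    using assms(1) unfolding Lp_per_def by (intro set_meas meas_comp) blast
  show "AE x in lebesgue. x \<in> unit_cell \<longrightarrow> norm (complex_of_real (w x $ j) * cis (- 2 * pi * (k \<bullet> x))) \<le> norm (norm (w x))"
    by (intro AE_I2) (simp add: norm_mult component_le_norm_cart)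
qed

lemma Lp_zero: assumes "0 < p" shows "(\<lambda>_. 0) \<in> Lp_per p"
  unfolding Lp_per_def set_integrable_def using assms by simp

lemma Lp_scale: assumes "u \<in> Lp_per p" "0 < p" shows "(\<lambda>y. c *\<^sub>R u y) \<in> Lp_per p"
proof -
  have m: "u \<in> borel_measurable lebesgue" and per: "\<forall>y z. int_vec z \<longrightarrow> u (y + z) = u y"
    and i: "set_integrable lebesgue unit_cell (\<lambda>y. norm (u y) powr p)" using assms unfolding Lp_per_def by blast+
  have "(\<lambda>y. c *\<^sub>R u y) \<in> borel_measurable lebesgue" using m by measurable
  moreover have "set_integrable lebesgue unit_cell (\<lambda>y. norm (c *\<^sub>R u y) powr p)"
  proof -
    have "set_integrable lebesgue unit_cell (\<lambda>y. \<bar>c\<bar> powr p * norm (u y) powr p)"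
      using i by (rule set_integrable_mult_right)
    then show ?thesis by (simp add: powr_mult)
  qed
  ultimately show ?thesis using per unfolding Lp_per_def by simp
qed

lemma add_powr_le: assumes "(0::real) \<le> a" "0 \<le> b" "0 < p"
  shows "(a + b) powr p \<le> 2 powr p * (a powr p + b powr p)"
proof -
  have "(a + b) powr p \<le> (2 * max a b) powr p" using assms by (intro powr_mono2) auto
  also have "\<dots> = 2 powr p * max a b powr p" using assms by (simp add: powr_mult)
  also have "max a b powr p \<le> a powr p + b powr p" using assms by (simp add: max_def)
  then have "2 powr p * max a b powr p \<le> 2 powr p * (a powr p + b powr p)" by simp
  finally show ?thesis .
qed

lemma Lp_add: assumes "u \<in> Lp_per p" "v \<in> Lp_per p" "0 < p" shows "(\<lambda>y. u y + v y) \<in> Lp_per p"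
proof -
  have m: "u \<in> borel_measurable lebesgue" and per: "\<forall>y z. int_vec z \<longrightarrow> u (y + z) = u y"
    and i: "set_integrable lebesgue unit_cell (\<lambda>y. norm (u y) powr p)" using assms unfolding Lp_per_def by blast+
  have m2: "v \<in> borel_measurable lebesgue" and per2: "\<forall>y z. int_vec z \<longrightarrow> v (y + z) = v y"
    and i2: "set_integrable lebesgue unit_cell (\<lambda>y. norm (v y) powr p)" using assms unfolding Lp_per_def by blast+
  have mm: "(\<lambda>y. u y + v y) \<in> borel_measurable lebesgue" using m m2 by measurable
  moreover have "set_integrable lebesgue unit_cell (\<lambda>y. norm (u y + v y) powr p)"
  proof (rule set_integrable_bound[where f = "\<lambda>y. 2 powr p * (norm (u y) powr p + norm (v y) powr p)"])
    show "set_integrable lebesgue unit_cell (\<lambda>y. 2 powr p * (norm (u y) powr p + norm (v y) powr p))"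
      using i i2 by (intro set_integrable_mult_right set_integral_add)
    show "set_borel_measurable lebesgue unit_cell (\<lambda>y. norm (u y + v y) powr p)"
      using m m2 by (intro set_meas) measurable
    show "AE x in lebesgue. x \<in> unit_cell \<longrightarrow> norm (norm (u x + v x) powr p) \<le> norm (2 powr p * (norm (u x) powr p + norm (v x) powr p))"
    proof (intro AE_I2 impI)
      fix x
      have "norm (u x + v x) powr p \<le> (norm (u x) + norm (v x)) powr p"
        using assms(3) by (intro powr_mono2) (auto intro: norm_triangle_ineq)
      also have "\<dots> \<le> 2 powr p * (norm (u x) powr p + norm (v x) powr p)"
        using assms(3) by (intro add_powr_le) auto
      finally show "norm (norm (u x + v x) powr p) \<le> norm (2 powr p * (norm (u x) powr p + norm (v x) powr p))"
        by simp
    qed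
  qed
  ultimately show ?thesis using per per2 unfolding Lp_per_def by simp
qed

lemma fc_add: assumes "u \<in> Lp_per p" "v \<in> Lp_per p" "1 \<le> p"
  shows "fourier_coeff (\<lambda>y. u y + v y) k = fourier_coeff u k + fourier_coeff v k"
proof -
  have "\<And>j. (LINT y:unit_cell|lebesgue. complex_of_real ((u y + v y) $ j) * cis (- 2 * pi * (k \<bullet> y)))
     = (LINT y:unit_cell|lebesgue. complex_of_real (u y $ j) * cis (- 2 * pi * (k \<bullet> y)))
     + (LINT y:unit_cell|lebesgue. complex_of_real (v y $ j) * cis (- 2 * pi * (k \<bullet> y)))"
  proof -
    fix j
    have e: "(\<lambda>y. complex_of_real ((u y + v y) $ j) * cis (- 2 * pi * (k \<bullet> y))) = 
      (\<lambda>y. complex_of_real (u y $ j) * cis (- 2 * pi * (k \<bullet> y)) + complex_of_real (v y $ j) * cis (- 2 * pi * (k \<bullet> y)))"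
      by (simp add: distrib_right)
    show "?thesis j" unfolding e by (rule set_integral_add(2)[OF Lp_int_comp[OF assms(1,3)] Lp_int_comp[OF assms(2,3)]])
  qed
  then show ?thesis unfolding fourier_coeff_def by (simp add: vec_eq_iff)
qed

lemma fc_scale: shows "fourier_coeff (\<lambda>y. c *\<^sub>R u y) k = complex_of_real c *s fourier_coeff u k"
proof -
  have e: "(\<lambda>y. complex_of_real ((c *\<^sub>R u y) $ j) * cis (- 2 * pi * (k \<bullet> y)))
     = (\<lambda>y. complex_of_real c * (complex_of_real (u y $ j) * cis (- 2 * pi * (k \<bullet> y))))" for j
    by (simp add: mult.assoc)
  show ?thesis unfolding fourier_coeff_def vec_eq_iff vector_smult_component vec_lambda_beta e
    set_integral_mult_right by (intro allI) (rule refl)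
qed

lemma fc_zero: "fourier_coeff (\<lambda>_. 0) k = 0"
  unfolding fourier_coeff_def by (simp add: vec_eq_iff)

lemma fc_diff_bound: assumes "u \<in> Lp_per p" "w \<in> Lp_per p" "1 \<le> p"
  shows "norm (fourier_coeff u k $ i - fourier_coeff w k $ i) \<le> (LINT y:unit_cell|lebesgue. norm (u y - w y))"
proof -
  let ?f = "\<lambda>u y. complex_of_real (u y $ i) * cis (- 2 * pi * (k \<bullet> y))"
  have "fourier_coeff u k $ i - fourier_coeff w k $ i = (LINT y:unit_cell|lebesgue. ?f u y - ?f w y)"
    unfolding fourier_coeff_def vec_lambda_beta
    by (rule set_integral_diff(2)[OF Lp_int_comp[OF assms(1,3)] Lp_int_comp[OF assms(2,3)], symmetric])
  also have "norm \<dots> \<le> (LINT y:unit_cell|lebesgue. norm (?f u y - ?f w y))"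
    by (intro set_integral_norm_bound set_integral_diff(1) Lp_int_comp[OF assms(1,3)] Lp_int_comp[OF assms(2,3)])
  also have "\<dots> \<le> (LINT y:unit_cell|lebesgue. norm (u y - w y))"
  proof (rule set_integral_mono)
    show "set_integrable lebesgue unit_cell (\<lambda>y. norm (?f u y - ?f w y))"
      by (intro set_integrable_norm set_integral_diff(1) Lp_int_comp[OF assms(1,3)] Lp_int_comp[OF assms(2,3)])
    have p0: "0 < p" using assms(3) by simp
    have "(\<lambda>y. u y + (-1) *\<^sub>R w y) \<in> Lp_per p" by (rule Lp_add[OF assms(1) Lp_scale[OF assms(2) p0] p0])
    then have "(\<lambda>y. u y - w y) \<in> Lp_per p" by simp
    then show "set_integrable lebesgue unit_cell (\<lambda>y. norm (u y - w y))" using assms(3) by (rule Lp_int_norm)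
    fix y
    have "?f u y - ?f w y = complex_of_real ((u y - w y) $ i) * cis (- 2 * pi * (k \<bullet> y))"
      by (simp add: left_diff_distrib)
    also have "norm \<dots> = \<bar>(u y - w y) $ i\<bar>"
      by (simp only: norm_mult norm_of_real norm_cis mult_1_right)
    also have "\<dots> \<le> norm (u y - w y)" by (rule component_le_norm_cart)
    finally show "norm (?f u y - ?f w y) \<le> norm (u y - w y)" .
  qed
  finally show ?thesis .
qed
lemma G_closed:
  fixes R :: "real ^ 'n ^ 'm"
  assumes p: "1 < p" and ws: "\<forall>j::nat. ws j \<in> G_space p R" and w: "w \<in> Lp_per p"
    and lim: "(\<lambda>j. Lp_dist p (ws j) w) \<longlonglongrightarrow> 0"
  shows "w \<in> G_space p R"
proof -
  have p1: "1 \<le> p" "0 < p" using p by auto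
  define V where "V k = (\<chi> j. complex_of_real ((transpose R *v k) $ j))" for k
  have Gj: "ws j \<in> Lp_per p \<and> (\<exists>lam. lam 0 = 0 \<and> (\<forall>k. int_vec k \<longrightarrow> fourier_coeff (ws j) k = lam k *s V k))" for j
    using ws[rule_format, of j] unfolding G_space_def V_def mem_Collect_eq .
  have wsL: "\<And>j. ws j \<in> Lp_per p" using Gj by (rule conjunct1)
  from Gj have "\<exists>L. \<forall>j. L j 0 = 0 \<and> (\<forall>k. int_vec k \<longrightarrow> fourier_coeff (ws j) k = L j k *s V k)"
    by (intro choice allI) (rule conjunct2)
  then obtain L where L: "\<And>j k. int_vec k \<Longrightarrow> fourier_coeff (ws j) k = L j k *s V k"
    by blast
  define I where "I j = (LINT y:unit_cell|lebesgue. norm (ws j y - w y) powr p)" for j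
  define J where "J j = (LINT y:unit_cell|lebesgue. norm (ws j y - w y))" for j
  have D: "(\<lambda>y. ws j y - w y) \<in> Lp_per p" for j
  proof -
    have "(\<lambda>y. ws j y + (-1) *\<^sub>R w y) \<in> Lp_per p" by (rule Lp_add[OF wsL Lp_scale[OF w p1(2)] p1(2)])
    then show ?thesis by simp
  qed
  have Dint: "set_integrable lebesgue unit_cell (\<lambda>y. norm (ws j y - w y) powr p)" for j
    using D unfolding Lp_per_def by blast
  have Jint: "set_integrable lebesgue unit_cell (\<lambda>y. norm (ws j y - w y))" for j
    using Lp_int_norm[OF D p1(1)] .
  have I0: "0 \<le> I j" for j
    unfolding I_def set_lebesgue_integral_def by (intro integral_nonneg_AE AE_I2) (simp add: indicator_def)
  have J0: "0 \<le> J j" for j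
    unfolding J_def set_lebesgue_integral_def by (intro integral_nonneg_AE AE_I2) (simp add: indicator_def)
  have "(\<lambda>j. Lp_dist p (ws j) w powr p) \<longlonglongrightarrow> 0"
    by (rule tendsto_zero_powrI[OF lim tendsto_const _ p1(2)]) (simp add: Lp_dist_def)
  moreover have "Lp_dist p (ws j) w powr p = I j" for j
    unfolding Lp_dist_def I_def[symmetric] using p1 I0[of j] by (simp add: powr_powr)
  ultimately have Ilim: "I \<longlonglongrightarrow> 0" by simp
  define \<mu> where "\<mu> = (LINT y:(unit_cell :: (real^'m) set)|lebesgue. (1::real))"
  have mu0: "0 \<le> \<mu>"
    unfolding \<mu>_def set_lebesgue_integral_def by (intro integral_nonneg_AE AE_I2) (simp add: indicator_def)
  have Jb: "J j \<le> e * \<mu> + e powr (1 - p) * I j" if e: "0 < e" for e j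
  proof -
    have "J j \<le> (LINT y:unit_cell|lebesgue. e * 1 + e powr (1 - p) * norm (ws j y - w y) powr p)"
      unfolding J_def
    proof (rule set_integral_mono)
      show "set_integrable lebesgue unit_cell (\<lambda>y. e * 1 + e powr (1 - p) * norm (ws j y - w y) powr p)"
        by (intro set_integral_add(1) set_integrable_mult_right int_one Dint)
      show "set_integrable lebesgue unit_cell (\<lambda>y. norm (ws j y - w y))" by (rule Jint)
      fix y show "norm (ws j y - w y) \<le> e * 1 + e powr (1 - p) * norm (ws j y - w y) powr p"
        using eps_powr[OF norm_ge_zero p1(1) e] by simp
    qed
    also have "\<dots> = e * \<mu> + e powr (1 - p) * I j"
    proof -
      have i1: "set_integrable lebesgue unit_cell (\<lambda>y. e * 1)" by (rule set_integrable_mult_right[OF int_one])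
      have i2: "set_integrable lebesgue unit_cell (\<lambda>y. e powr (1 - p) * norm (ws j y - w y) powr p)"
        by (rule set_integrable_mult_right[OF Dint])
      show ?thesis unfolding set_integral_add(2)[OF i1 i2] \<mu>_def I_def
        by (simp only: set_integral_mult_right)
    qed
    finally show ?thesis .
  qed
  have Jlim: "J \<longlonglongrightarrow> 0"
  proof (rule LIMSEQ_I)
    fix r :: real assume r: "0 < r"
    define e where "e = r / (2 * (\<mu> + 1))"
    have e0: "0 < e" using r mu0 unfolding e_def by simp
    define c where "c = e powr (1 - p)"
    have c0: "0 < c" using e0 unfolding c_def by simp
    obtain N where N: "\<And>n. n \<ge> N \<Longrightarrow> norm (I n - 0) < r / (2 * c)"
      using LIMSEQ_D[OF Ilim, of "r / (2 * c)"] r c0 by auto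
    have emu: "e * \<mu> < r / 2"
    proof -
      have "e * \<mu> = r * \<mu> / (2 * (\<mu> + 1))" unfolding e_def by simp
      also have "\<dots> < r / 2" using r mu0 by (simp add: field_simps)
      finally show ?thesis .
    qed
    show "\<exists>no. \<forall>n\<ge>no. norm (J n - 0) < r"
    proof (intro exI allI impI)
      fix n assume "N \<le> n"
      then have "I n < r / (2 * c)" using N[of n] I0[of n] by simp
      then have "c * I n < r / 2" using c0 by (simp add: field_simps)
      then show "norm (J n - 0) < r" using Jb[OF e0, of n] J0[of n] emu unfolding c_def by simp
    qed
  qed
  have clim: "(\<lambda>j. fourier_coeff (ws j) k $ i) \<longlonglongrightarrow> fourier_coeff w k $ i" for k i
  proof (rule LIM_zero_cancel, rule Lim_null_comparison[OF _ Jlim])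
    show "\<forall>\<^sub>F j in sequentially. norm (fourier_coeff (ws j) k $ i - fourier_coeff w k $ i) \<le> J j"
      unfolding J_def using fc_diff_bound[OF wsL w p1(1)] by simp
  qed
  define lam where "lam k = (if \<exists>i. V k $ i \<noteq> 0 then fourier_coeff w k $ (SOME i. V k $ i \<noteq> 0) / V k $ (SOME i. V k $ i \<noteq> 0) else 0)" for k
  have "lam 0 = 0" unfolding lam_def V_def by simp
  moreover have "fourier_coeff w k = lam k *s V k" if k: "int_vec k" for k
  proof (cases "\<exists>i. V k $ i \<noteq> 0")
    case True
    define i0 where "i0 = (SOME i. V k $ i \<noteq> 0)"
    have i0: "V k $ i0 \<noteq> 0" unfolding i0_def using True by (rule someI_ex)
    have lk: "lam k = fourier_coeff w k $ i0 / V k $ i0" unfolding lam_def i0_def using True by simp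
    show ?thesis
    proof (subst vec_eq_iff, intro allI)
      fix i
      have l1: "(\<lambda>j. fourier_coeff (ws j) k $ i * V k $ i0) \<longlonglongrightarrow> fourier_coeff w k $ i * V k $ i0"
        by (intro tendsto_mult_right clim)
      have l2: "(\<lambda>j. fourier_coeff (ws j) k $ i0 * V k $ i) \<longlonglongrightarrow> fourier_coeff w k $ i0 * V k $ i"
        by (intro tendsto_mult_right clim)
      have eq: "(\<lambda>j. fourier_coeff (ws j) k $ i0 * V k $ i) = (\<lambda>j. fourier_coeff (ws j) k $ i * V k $ i0)"
        using L[OF k] by (simp add: mult_ac)
      have "fourier_coeff w k $ i * V k $ i0 = fourier_coeff w k $ i0 * V k $ i"
        using LIMSEQ_unique[OF l1 l2[unfolded eq]] .
      then show "fourier_coeff w k $ i = (lam k *s V k) $ i"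
        using i0 unfolding lk by (simp add: field_simps)
    qed
  next
    case False
    show ?thesis
    proof (subst vec_eq_iff, intro allI)
      fix i
      have "(\<lambda>j. fourier_coeff (ws j) k $ i) = (\<lambda>j. 0)" using L[OF k] False by simp
      then have "fourier_coeff w k $ i = 0" using LIMSEQ_unique[OF clim[of k i]] by simp
      then show "fourier_coeff w k $ i = (lam k *s V k) $ i" using False by simp
    qed
  qed
  ultimately show ?thesis using w unfolding G_space_def V_def mem_Collect_eq
    by (intro conjI exI[where x=lam]) simp_all
qed

theorem lemma5p3:
  fixes p :: real and R :: "real ^ 'n ^ 'm"
  assumes "CARD('n) < CARD('m)"
    and "1 < p"
    and "\<forall>k. int_vec k \<and> k \<noteq> 0 \<longrightarrow> transpose R *v k \<noteq> 0"
  shows "G_space p R \<subseteq> Lp_per p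
    \<and> (\<lambda>_. 0) \<in> G_space p R
    \<and> (\<forall>u \<in> G_space p R. \<forall>v \<in> G_space p R. (\<lambda>y. u y + v y) \<in> G_space p R)
    \<and> (\<forall>c::real. \<forall>u \<in> G_space p R. (\<lambda>y. c *\<^sub>R u y) \<in> G_space p R)
    \<and> (\<forall>ws w. (\<forall>j::nat. ws j \<in> G_space p R) \<longrightarrow> w \<in> Lp_per p
         \<longrightarrow> (\<lambda>j. Lp_dist p (ws j) w) \<longlonglongrightarrow> 0 \<longrightarrow> w \<in> G_space p R)"
proof (intro conjI ballI allI impI)
  have p1: "1 \<le> p" "0 < p" using assms(2) by auto
  show "G_space p R \<subseteq> Lp_per p" unfolding G_space_def by blast
  show "(\<lambda>_. 0) \<in> G_space p R"
  proof -
    have "fourier_coeff (\<lambda>_. 0) k = (\<lambda>_. 0) k *s (\<chi> j. complex_of_real ((transpose R *v k) $ j))" for k :: "real^'m"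
      by (simp add: fc_zero vec_eq_iff)
    then show ?thesis unfolding G_space_def mem_Collect_eq using Lp_zero[OF p1(2)]
      by (intro conjI exI[where x="\<lambda>_. 0"]) simp_all
  qed
  fix u v assume u: "u \<in> G_space p R" and v: "v \<in> G_space p R"
  from u obtain lu where lu: "lu 0 = 0" "\<And>k. int_vec k \<Longrightarrow> fourier_coeff u k = lu k *s (\<chi> j. complex_of_real ((transpose R *v k) $ j))"
    and uL: "u \<in> Lp_per p" unfolding G_space_def by blast
  from v obtain lv where lv: "lv 0 = 0" "\<And>k. int_vec k \<Longrightarrow> fourier_coeff v k = lv k *s (\<chi> j. complex_of_real ((transpose R *v k) $ j))"
    and vL: "v \<in> Lp_per p" unfolding G_space_def by blast
  show "(\<lambda>y. u y + v y) \<in> G_space p R"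
  proof -
    have "fourier_coeff (\<lambda>y. u y + v y) k = (\<lambda>k. lu k + lv k) k *s (\<chi> j. complex_of_real ((transpose R *v k) $ j))"
      if k: "int_vec k" for k
      unfolding fc_add[OF uL vL p1(1)] lu(2)[OF k] lv(2)[OF k] by (simp add: vec_eq_iff distrib_right)
    moreover have "(\<lambda>k. lu k + lv k) 0 = 0" using lu lv by simp
    ultimately show ?thesis unfolding G_space_def mem_Collect_eq using Lp_add[OF uL vL p1(2)]
      by (intro conjI exI[where x="\<lambda>k. lu k + lv k"]) simp_all
  qed
next
  have p1: "1 \<le> p" "0 < p" using assms(2) by auto
  fix c :: real and u assume u: "u \<in> G_space p R"
  from u obtain lu where lu: "lu 0 = 0" "\<And>k. int_vec k \<Longrightarrow> fourier_coeff u k = lu k *s (\<chi> j. complex_of_real ((transpose R *v k) $ j))"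
    and uL: "u \<in> Lp_per p" unfolding G_space_def by blast
  show "(\<lambda>y. c *\<^sub>R u y) \<in> G_space p R"
  proof -
    have "fourier_coeff (\<lambda>y. c *\<^sub>R u y) k = (\<lambda>k. complex_of_real c * lu k) k *s (\<chi> j. complex_of_real ((transpose R *v k) $ j))"
      if k: "int_vec k" for k
      unfolding fc_scale lu(2)[OF k] by (simp add: vec_eq_iff mult.assoc)
    moreover have "(\<lambda>k. complex_of_real c * lu k) 0 = 0" using lu by simp
    ultimately show ?thesis unfolding G_space_def mem_Collect_eq using Lp_scale[OF uL p1(2)]
      by (intro conjI exI[where x="\<lambda>k. complex_of_real c * lu k"]) simp_all
  qed
next
  fix ws w assume "\<forall>j::nat. ws j \<in> G_space p R" "w \<in> Lp_per p" "(\<lambda>j. Lp_dist p (ws j) w) \<longlonglongrightarrow> 0"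
  then show "w \<in> G_space p R" using G_closed[OF assms(2)] by blast
qed

end
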